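(* Consider a finite reward-free MDP with occupancy polytope $\Phi$. Let $\mathcal D=\{(d_e^k,\epsilon^k)\}_{k=1}^K$ with $K\ge1$, $d_e^k\in\Phi$, $\epsilon^k\ge0$, and let $d_e'\in\Phi$. Let $\mathcal Z_{\mathcal D}:=\bigcup_{k=1}^K\mathrm{supp}(d_e^k)$ and $\alpha(d_e',\mathcal D):=\sum_{(s,a)\notin\mathcal Z_{\mathcal D}}d_e'(s,a)$. Then there exists a reward $r_{\mathcal Z}\in\mathcal R(\mathcal D)$ such that \[\mathrm{subopt}(r_{\mathcal Z},d_e')=\frac{\alpha(d_e',\mathcal D)}{|\mathcal Z_{\mathcal D}|}.\]
   Context: The MDP has finite $S$, $A$, transitions $P$, initial distribution $\mu_0$, discount $\gamma\in(0,1)$; $(Md)(s)=\sum_a d(s,a)-\gamma\sum_{s',a'}P(s\mid s',a')d(s',a')$ and $\Phi=\{d\ge0:Md=(1-\gamma)\mu_0\}$. Rewards are $r\in\Delta(S\times A)$ (probability simplex). $\mathrm{subopt}(r,d):=\max_{\tilde d\in\Phi}r^\top\tilde d-r^\top d$. $\mathcal R(\mathcal D):=\{r\in\Delta(S\times A):\mathrm{subopt}(r,d_e^k)\le\epsilon^k\ \forall k\}$. $\mathrm{supp}(d)=\{(s,a):d(s,a)\ne0\}$. *)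

theory Defs
  imports "HOL-Analysis.Analysis"
begin

text \<open>Finite MDP: states 's, actions 'a (finite types).
  P s' a' s is the transition probability P(s | s', a').
  Occupancy measures and rewards are functions on S x A.\<close>

definition valid_mdp :: "('s::finite \<Rightarrow> 'a::finite \<Rightarrow> 's \<Rightarrow> real) \<Rightarrow> ('s \<Rightarrow> real) \<Rightarrow> real \<Rightarrow> bool" where
  "valid_mdp P mu0 gamma \<longleftrightarrow>
     (\<forall>s a s'. 0 \<le> P s a s') \<and> (\<forall>s a. (\<Sum>s'\<in>UNIV. P s a s') = 1) \<and>
     (\<forall>s. 0 \<le> mu0 s) \<and> (\<Sum>s\<in>UNIV. mu0 s) = 1 \<and> 0 < gamma \<and> gamma < 1"

definition Mop :: "('s::finite \<Rightarrow> 'a::finite \<Rightarrow> 's \<Rightarrow> real) \<Rightarrow> real \<Rightarrow> ('s \<times> 'a \<Rightarrow> real) \<Rightarrow> 's \<Rightarrow> real" where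
  "Mop P gamma d s = (\<Sum>a\<in>UNIV. d (s, a)) - gamma * (\<Sum>x\<in>UNIV. P (fst x) (snd x) s * d x)"

definition occ :: "('s::finite \<Rightarrow> 'a::finite \<Rightarrow> 's \<Rightarrow> real) \<Rightarrow> ('s \<Rightarrow> real) \<Rightarrow> real \<Rightarrow> ('s \<times> 'a \<Rightarrow> real) set" where
  "occ P mu0 gamma = {d. (\<forall>x. 0 \<le> d x) \<and> (\<forall>s. Mop P gamma d s = (1 - gamma) * mu0 s)}"

definition reward_simplex :: "('x::finite \<Rightarrow> real) set" where
  "reward_simplex = {r. (\<forall>x. 0 \<le> r x) \<and> (\<Sum>x\<in>UNIV. r x) = 1}"

definition ip :: "('x::finite \<Rightarrow> real) \<Rightarrow> ('x \<Rightarrow> real) \<Rightarrow> real" where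
  "ip r d = (\<Sum>x\<in>UNIV. r x * d x)"

text \<open>subopt(r,d) = max over Phi of r^T d~ minus r^T d (max = Sup, attained as Phi is a polytope).\<close>
definition subopt :: "('s::finite \<Rightarrow> 'a::finite \<Rightarrow> 's \<Rightarrow> real) \<Rightarrow> ('s \<Rightarrow> real) \<Rightarrow> real \<Rightarrow> ('s \<times> 'a \<Rightarrow> real) \<Rightarrow> ('s \<times> 'a \<Rightarrow> real) \<Rightarrow> real" where
  "subopt P mu0 gamma r d = (SUP d'\<in>occ P mu0 gamma. ip r d') - ip r d"

definition feasR :: "('s::finite \<Rightarrow> 'a::finite \<Rightarrow> 's \<Rightarrow> real) \<Rightarrow> ('s \<Rightarrow> real) \<Rightarrow> real \<Rightarrow> nat \<Rightarrow> (nat \<Rightarrow> 's \<times> 'a \<Rightarrow> real) \<Rightarrow> (nat \<Rightarrow> real) \<Rightarrow> ('s \<times> 'a \<Rightarrow> real) set" where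
  "feasR P mu0 gamma K de eps = {r \<in> reward_simplex. \<forall>k\<in>{1..K}. subopt P mu0 gamma r (de k) \<le> eps k}"

definition supp :: "('x \<Rightarrow> real) \<Rightarrow> 'x set" where
  "supp d = {x. d x \<noteq> 0}"

definition ZD :: "nat \<Rightarrow> (nat \<Rightarrow> 'x \<Rightarrow> real) \<Rightarrow> 'x set" where
  "ZD K de = (\<Union>k\<in>{1..K}. supp (de k))"

definition alphaD :: "('x::finite \<Rightarrow> real) \<Rightarrow> nat \<Rightarrow> (nat \<Rightarrow> 'x \<Rightarrow> real) \<Rightarrow> real" where
  "alphaD d' K de = (\<Sum>x\<in>- ZD K de. d' x)"

end

theory Submission
  imports Defs
begin

lemma occ_sum1:
  fixes P :: "'s::finite \<Rightarrow> 'a::finite \<Rightarrow> 's \<Rightarrow> real"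
  assumes v: "valid_mdp P mu0 gamma" and d: "d \<in> occ P mu0 gamma"
  shows "(\<Sum>x\<in>UNIV. d x) = 1"
proof -
  have P1: "\<And>s a. (\<Sum>s'\<in>UNIV. P s a s') = 1" and m1: "(\<Sum>s\<in>UNIV. mu0 s) = 1"
    and g: "gamma < 1" using v unfolding valid_mdp_def by auto
  have M: "\<And>s. Mop P gamma d s = (1 - gamma) * mu0 s" using d unfolding occ_def by auto
  have "(\<Sum>s\<in>UNIV. Mop P gamma d s) = (1 - gamma) * (\<Sum>s\<in>UNIV. mu0 s)"
    by (simp add: M sum_distrib_left)
  also have "\<dots> = 1 - gamma" using m1 by simp
  finally have e1: "(\<Sum>s\<in>UNIV. Mop P gamma d s) = 1 - gamma" .
  have A: "(\<Sum>s\<in>UNIV. \<Sum>a\<in>UNIV. d (s, a)) = (\<Sum>x\<in>UNIV. d x)"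
    by (simp add: sum.cartesian_product UNIV_Times_UNIV[symmetric] del: UNIV_Times_UNIV)
  have B: "(\<Sum>s\<in>UNIV. \<Sum>x\<in>UNIV. P (fst x) (snd x) s * d x)
      = (\<Sum>x\<in>UNIV. (\<Sum>s\<in>UNIV. P (fst x) (snd x) s) * d x)"
    by (subst sum.swap) (simp add: sum_distrib_right)
  also have "\<dots> = (\<Sum>x\<in>UNIV. d x)" using P1 by simp
  finally have B': "(\<Sum>s\<in>UNIV. \<Sum>x\<in>UNIV. P (fst x) (snd x) s * d x) = (\<Sum>x\<in>UNIV. d x)" .
  have "(\<Sum>s\<in>UNIV. Mop P gamma d s) = (1 - gamma) * (\<Sum>x\<in>UNIV. d x)"
    unfolding Mop_def sum_subtractf sum_distrib_left[symmetric] A B' by (simp add: algebra_simps)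
  with e1 g show ?thesis by simp
qed

theorem mainTheorem4:
  fixes P :: "'s::finite \<Rightarrow> 'a::finite \<Rightarrow> 's \<Rightarrow> real"
    and mu0 :: "'s \<Rightarrow> real" and gamma :: real
    and K :: nat and de :: "nat \<Rightarrow> 's \<times> 'a \<Rightarrow> real" and eps :: "nat \<Rightarrow> real"
    and de' :: "'s \<times> 'a \<Rightarrow> real"
  assumes "valid_mdp P mu0 gamma"
    and "K \<ge> 1"
    and "\<forall>k\<in>{1..K}. de k \<in> occ P mu0 gamma"
    and "\<forall>k\<in>{1..K}. eps k \<ge> 0"
    and "de' \<in> occ P mu0 gamma"
  shows "\<exists>r\<in>feasR P mu0 gamma K de eps.
           subopt P mu0 gamma r de' = alphaD de' K de / real (card (ZD K de))"
proof -
  define Z where "Z = ZD K de"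
  define c where "c = real (card Z)"
  define r where "r = (\<lambda>x. if x \<in> Z then 1 / c else (0::real))"
  have d1: "de 1 \<in> occ P mu0 gamma" using assms by auto
  have "(\<Sum>x\<in>UNIV. de 1 x) = 1" using occ_sum1[OF assms(1) d1] .
  then obtain x0 where "de 1 x0 \<noteq> 0" by (metis sum.neutral zero_neq_one)
  hence "x0 \<in> Z" using assms(2) unfolding Z_def ZD_def supp_def by auto
  hence cpos: "c > 0" unfolding c_def by (auto simp: card_gt_0_iff)
  have ipr: "ip r d = (\<Sum>x\<in>Z. d x) / c" for d
  proof -
    have "ip r d = (\<Sum>x\<in>UNIV. (if x \<in> Z then d x / c else 0))"
      unfolding ip_def r_def by (rule sum.cong) auto
    also have "\<dots> = (\<Sum>x\<in>Z. d x / c)" by (simp add: sum.If_cases)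
    finally show ?thesis by (simp add: sum_divide_distrib)
  qed
  have le: "ip r d \<le> 1 / c" if "d \<in> occ P mu0 gamma" for d
  proof -
    have nn: "\<forall>x. 0 \<le> d x" using that unfolding occ_def by auto
    have "(\<Sum>x\<in>Z. d x) \<le> (\<Sum>x\<in>UNIV. d x)"
      by (rule sum_mono2) (auto simp: nn)
    also have "\<dots> = 1" using occ_sum1[OF assms(1) that] .
    finally show ?thesis unfolding ipr using cpos by (simp add: divide_right_mono)
  qed
  have eqk: "ip r (de k) = 1 / c" if "k \<in> {1..K}" for k
  proof -
    have dk: "de k \<in> occ P mu0 gamma" using assms that by auto
    have "(\<Sum>x\<in>Z. de k x) = (\<Sum>x\<in>UNIV. de k x)"
    proof (rule sum.mono_neutral_left)
      show "\<forall>i\<in>UNIV - Z. de k i = 0" using that unfolding Z_def ZD_def supp_def by auto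
    qed auto
    also have "\<dots> = 1" using occ_sum1[OF assms(1) dk] .
    finally show ?thesis unfolding ipr by simp
  qed
  have SUP: "(SUP d'\<in>occ P mu0 gamma. ip r d') = 1 / c"
  proof (rule cSup_eq_maximum)
    show "1 / c \<in> (\<lambda>d'. ip r d') ` occ P mu0 gamma"
      using eqk[of 1] d1 assms(2) by (metis atLeastAtMost_iff image_eqI order_refl)
    show "\<And>x. x \<in> (\<lambda>d'. ip r d') ` occ P mu0 gamma \<Longrightarrow> x \<le> 1 / c" using le by auto
  qed
  have rS: "r \<in> reward_simplex"
  proof -
    have "(\<Sum>x\<in>UNIV. r x) = (\<Sum>x\<in>Z. 1 / c)" unfolding r_def by (simp add: sum.If_cases)
    also have "\<dots> = 1" using cpos unfolding c_def by (auto simp: card_gt_0_iff)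
    finally show ?thesis unfolding reward_simplex_def r_def using cpos by auto
  qed
  have SUP': "Sup (ip r ` occ P mu0 gamma) = 1 / c" using SUP by (simp add: eta_contract_eq)
  have feas: "r \<in> feasR P mu0 gamma K de eps"
    unfolding feasR_def subopt_def
  proof (intro CollectI conjI ballI)
    fix k assume k: "k \<in> {1..K}"
    have "Sup (ip r ` occ P mu0 gamma) - ip r (de k) = 0" using SUP' eqk[OF k] by linarith
    thus "Sup (ip r ` occ P mu0 gamma) - ip r (de k) \<le> eps k" using assms(4) k by simp
  qed (rule rS)
  have "subopt P mu0 gamma r de' = (1 - (\<Sum>x\<in>Z. de' x)) / c"
    unfolding subopt_def SUP' ipr by (simp add: diff_divide_distrib)
  also have "1 - (\<Sum>x\<in>Z. de' x) = (\<Sum>x\<in>- Z. de' x)"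
  proof -
    have "(\<Sum>x\<in>Z \<union> - Z. de' x) = (\<Sum>x\<in>Z. de' x) + (\<Sum>x\<in>- Z. de' x)"
      by (rule sum.union_disjoint) auto
    hence "(\<Sum>x\<in>UNIV. de' x) = (\<Sum>x\<in>Z. de' x) + (\<Sum>x\<in>- Z. de' x)" by simp
    thus ?thesis using occ_sum1[OF assms(1) assms(5)] by simp
  qed
  finally have "subopt P mu0 gamma r de' = (\<Sum>x\<in>- Z. de' x) / c" .
  hence "subopt P mu0 gamma r de' = alphaD de' K de / real (card (ZD K de))"
    unfolding alphaD_def Z_def c_def .
  with feas show ?thesis by blast
qed

end
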